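(* Let $A$ be a finite alphabet with $|A|=k$, and let $L\subseteq A^*$ be finite and nonempty. Let $\ell$ be the length of the longest word in $L$. Then $1+k(\ell^{1/k}-2)<h(L)\leq \ell+1$.
   Context: For $n\in\mathbb{N}$, $u\sim_n v$ iff $u$ and $v$ have exactly the same (scattered) subwords of length at most $n$. A language $L$ is $n$-PT if it is a union of $\sim_n$-classes, and $h(L)$ is the least $n$ such that $L$ is $n$-PT. *)

theory Defs
  imports Complex_Main "HOL-Library.Sublist"
begin

definition subwords_upto :: "nat \<Rightarrow> 'a list \<Rightarrow> 'a list set" where
  "subwords_upto n u = {w. subseq w u \<and> length w \<le> n}"

definition simeq_n :: "nat \<Rightarrow> 'a list \<Rightarrow> 'a list \<Rightarrow> bool" where
  "simeq_n n u v \<longleftrightarrow> subwords_upto n u = subwords_upto n v"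

definition n_PT :: "'a set \<Rightarrow> nat \<Rightarrow> 'a list set \<Rightarrow> bool" where
  "n_PT A n L \<longleftrightarrow> (\<forall>u \<in> lists A. \<forall>v \<in> lists A. simeq_n n u v \<longrightarrow> (u \<in> L \<longleftrightarrow> v \<in> L))"

definition h :: "'a set \<Rightarrow> 'a list set \<Rightarrow> nat" where
  "h A L = (LEAST n. n_PT A n L)"

end

theory Submission
  imports Defs
begin

definition univ :: "'a set \<Rightarrow> nat \<Rightarrow> 'a list \<Rightarrow> bool" where
  "univ B p P \<longleftrightarrow> (\<forall>w. set w \<subseteq> B \<longrightarrow> length w \<le> p \<longrightarrow> subseq w P)"

definition rigid :: "nat \<Rightarrow> 'a list \<Rightarrow> bool" where
  "rigid n u \<longleftrightarrow> (\<forall>v. set v \<subseteq> set u \<longrightarrow> simeq_n n u v \<longrightarrow> length v \<le> length u)"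

lemma simeq_iff: "simeq_n n u v \<longleftrightarrow> (\<forall>w. length w \<le> n \<longrightarrow> (subseq w u \<longleftrightarrow> subseq w v))"
  unfolding simeq_n_def subwords_upto_def by auto

lemma subseq_set: "subseq a b \<Longrightarrow> set a \<subseteq> set b"
  by (induction rule: list_emb.induct) auto

lemma transfer_dir:
  assumes uP: "univ B p P" and uS: "univ B q S" and sP: "set P \<subseteq> B" and sS: "set S \<subseteq> B"
    and sx: "set x' \<subseteq> B" and eq: "simeq_n t x x'" and n: "n \<le> t + p + q"
    and lw: "length w \<le> n" and sw: "subseq w (P @ x' @ S)"
  shows "subseq w (P @ x @ S)"
proof -
  obtain w1 w' where w: "w = w1 @ w'" and s1: "subseq w1 P" and s': "subseq w' (x' @ S)"
    using sw subseq_appendE by blast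
  obtain w2 w3 where w': "w' = w2 @ w3" and s2: "subseq w2 x'" and s3: "subseq w3 S"
    using s' subseq_appendE by blast
  define t1 where "t1 = min (length w2) (p - length w1)"
  define rest where "rest = drop t1 w2"
  define t2 where "t2 = min (length rest) (q - length w3)"
  define \<alpha> where "\<alpha> = take t1 w2"
  define \<beta> where "\<beta> = take (length rest - t2) rest"
  define \<gamma> where "\<gamma> = drop (length rest - t2) rest"
  have bg: "\<beta> @ \<gamma> = rest" unfolding \<beta>_def \<gamma>_def by (rule append_take_drop_id)
  have w2: "w2 = \<alpha> @ \<beta> @ \<gamma>" unfolding bg unfolding \<alpha>_def rest_def by simp
  have lr: "length rest = length w2 - t1" unfolding rest_def by simp
  have lb: "length \<beta> = length rest - t2" unfolding \<beta>_def by simp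
  have la: "length \<alpha> = t1" unfolding \<alpha>_def t1_def by simp
  have lg: "length \<gamma> = t2" unfolding \<gamma>_def t2_def by simp
  have setw2: "set w2 \<subseteq> B" using subseq_set[OF s2] sx by blast
  have "length \<beta> \<le> t" using lw n unfolding lb lr t2_def t1_def w w' length_append by (simp add: min_def; arith)
  moreover have "subseq \<beta> w2"
  proof -
    have "subseq \<beta> (\<beta> @ \<gamma>)" by (rule subseq_rev_drop_many) simp
    hence "subseq \<beta> (\<alpha> @ \<beta> @ \<gamma>)" by (rule subseq_drop_many)
    thus ?thesis using w2 by simp
  qed
  hence "subseq \<beta> x'" using s2 subseq_order.order_trans by blast
  ultimately have sb: "subseq \<beta> x" using eq unfolding simeq_iff by blast
  have sa: "subseq (w1 @ \<alpha>) P"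
  proof (cases "length w1 \<le> p")
    case True
    have "set (w1 @ \<alpha>) \<subseteq> B" using subseq_set[OF s1] sP setw2 w2 by auto
    moreover have "length (w1 @ \<alpha>) \<le> p" using True la unfolding t1_def by simp
    ultimately show ?thesis using uP unfolding univ_def by blast
  next
    case False
    hence "\<alpha> = []" unfolding \<alpha>_def t1_def by simp
    thus ?thesis using s1 by simp
  qed
  have sg: "subseq (\<gamma> @ w3) S"
  proof (cases "length w3 \<le> q")
    case True
    have "set (\<gamma> @ w3) \<subseteq> B" using subseq_set[OF s3] sS setw2 w2 by auto
    moreover have "length (\<gamma> @ w3) \<le> q" using True lg unfolding t2_def by simp
    ultimately show ?thesis using uS unfolding univ_def by blast
  next
    case False
    hence "\<gamma> = []" unfolding \<gamma>_def t2_def by simp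
    thus ?thesis using s3 by simp
  qed
  have "w = (w1 @ \<alpha>) @ \<beta> @ (\<gamma> @ w3)" using w w' w2 by simp
  moreover have "subseq ((w1 @ \<alpha>) @ \<beta> @ (\<gamma> @ w3)) (P @ x @ S)"
    by (intro list_emb_append_mono sa sb sg)
  ultimately show ?thesis by simp
qed

lemma simeq_sym: "simeq_n n u v \<Longrightarrow> simeq_n n v u"
  unfolding simeq_n_def by simp

lemma simeq_piece:
  assumes uP: "univ B p P" and uS: "univ B q S" and sP: "set P \<subseteq> B" and sS: "set S \<subseteq> B"
    and sx: "set x \<subseteq> B" and sx': "set x' \<subseteq> B" and eq: "simeq_n t x x'" and n: "n \<le> t + p + q"
  shows "simeq_n n (P @ x @ S) (P @ x' @ S)"
  unfolding simeq_iff
  using transfer_dir[OF uP uS sP sS sx' eq n] transfer_dir[OF uP uS sP sS sx simeq_sym[OF eq] n]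
  by blast

lemma rigid_piece:
  assumes r: "rigid n (P @ x @ S)" and uP: "univ B p P" and uS: "univ B q S"
    and sP: "set P \<subseteq> B" and sS: "set S \<subseteq> B" and sx: "set x \<subseteq> B" and n: "n \<le> t + p + q"
  shows "rigid t x"
  unfolding rigid_def
proof (intro allI impI)
  fix v assume sv: "set v \<subseteq> set x" and e: "simeq_n t x v"
  have "simeq_n n (P @ x @ S) (P @ v @ S)"
    using simeq_piece[OF uP uS sP sS sx _ e n] sv sx by blast
  moreover have "set (P @ v @ S) \<subseteq> set (P @ x @ S)" using sv by auto
  ultimately have "length (P @ v @ S) \<le> length (P @ x @ S)" using r unfolding rigid_def by blast
  thus "length v \<le> length x" by simp
qed

inductive archdec :: "'a set \<Rightarrow> nat \<Rightarrow> 'a list \<Rightarrow> bool" for B where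
  ad0: "set s \<subseteq> B \<Longrightarrow> set s \<noteq> B \<Longrightarrow> archdec B 0 s"
| adS: "a \<in> B \<Longrightarrow> set r \<subseteq> B - {a} \<Longrightarrow> set (r @ [a]) = B \<Longrightarrow> archdec B m z
        \<Longrightarrow> archdec B (Suc m) (r @ [a] @ z)"

lemma archdec_set: "archdec B m z \<Longrightarrow> set z \<subseteq> B"
  by (induction rule: archdec.induct) auto

lemma univ_mono: "univ B p P \<Longrightarrow> q \<le> p \<Longrightarrow> univ B q P"
  unfolding univ_def by auto

lemma univ0: "univ B 0 P"
  unfolding univ_def by auto

lemma univ_app1: "univ B p P \<Longrightarrow> univ B p (Q @ P)"
  unfolding univ_def by (auto intro: subseq_drop_many)

lemma archdec_univ: "archdec B m z \<Longrightarrow> univ B m z"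
proof (induction rule: archdec.induct)
  case (ad0 s) show ?case by (rule univ0)
next
  case (adS a r m z)
  show ?case unfolding univ_def
  proof (intro allI impI)
    fix w assume sw: "set w \<subseteq> B" and lw: "length w \<le> Suc m"
    show "subseq w (r @ [a] @ z)"
    proof (cases w)
      case Nil then show ?thesis by simp
    next
      case (Cons c w')
      have "c \<in> set (r @ [a])" using sw adS.hyps(3) Cons by auto
      hence "subseq [c] (r @ [a])" by (simp add: subseq_singleton_left)
      moreover have "subseq w' z" using adS.IH sw lw Cons unfolding univ_def by auto
      ultimately have "subseq ([c] @ w') ((r @ [a]) @ z)" by (rule list_emb_append_mono)
      thus ?thesis using Cons by simp
    qed
  qed
qed

lemma univ_extend:
  assumes "univ B p P" "set (r @ [a]) = B"
  shows "univ B (Suc p) (P @ r @ [a])"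
  unfolding univ_def
proof (intro allI impI)
  fix w assume sw: "set w \<subseteq> B" and lw: "length w \<le> Suc p"
  show "subseq w (P @ r @ [a])"
  proof (cases w rule: rev_exhaust)
    case Nil then show ?thesis by simp
  next
    case (snoc w' c)
    have "c \<in> set (r @ [a])" using sw assms(2) snoc by auto
    hence "subseq [c] (r @ [a])" by (simp add: subseq_singleton_left)
    moreover have "subseq w' P" using assms(1) sw lw snoc unfolding univ_def by auto
    ultimately have "subseq (w' @ [c]) (P @ (r @ [a]))" by (intro list_emb_append_mono)
    thus ?thesis using snoc by simp
  qed
qed

lemma split_arch: "z \<noteq> [] \<Longrightarrow> \<exists>r a s. z = r @ [a] @ s \<and> a \<notin> set r \<and> set (r @ [a]) = set z"
proof (induction z rule: rev_induct)
  case Nil then show ?case by simp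
next
  case (snoc c z')
  show ?case
  proof (cases "c \<in> set z'")
    case False
    then show ?thesis by (intro exI[of _ z'] exI[of _ c] exI[of _ "[]"]) auto
  next
    case True
    hence "z' \<noteq> []" by auto
    then obtain r a s where "z' = r @ [a] @ s" "a \<notin> set r" "set (r @ [a]) = set z'"
      using snoc.IH by blast
    then show ?thesis using True
      by (intro exI[of _ r] exI[of _ a] exI[of _ "s @ [c]"]) auto
  qed
qed

lemma archdec_exists: "B \<noteq> {} \<Longrightarrow> set z \<subseteq> B \<Longrightarrow> \<exists>m. archdec B m z"
proof (induction "length z" arbitrary: z rule: less_induct)
  case less
  show ?case
  proof (cases "set z = B")
    case False
    then show ?thesis using less.prems by (blast intro: ad0)
  next
    case True
    hence "z \<noteq> []" using less.prems by auto
    then obtain r a s where z: "z = r @ [a] @ s" "a \<notin> set r" "set (r @ [a]) = set z"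
      using split_arch by blast
    have "length s < length z" using z by simp
    moreover have "set s \<subseteq> B" using z less.prems by auto
    ultimately obtain m where "archdec B m s" using less.hyps less.prems by blast
    hence "archdec B (Suc m) (r @ [a] @ s)"
      using z True by (intro adS) auto
    thus ?thesis using z by blast
  qed
qed

definition F :: "nat \<Rightarrow> nat \<Rightarrow> real" where
  "F j n = ((real n - 1) / real j + 2) ^ j"

lemma amgm:
  fixes x y :: real
  assumes x: "0 \<le> x" and y: "0 < y"
  shows "x * y ^ j \<le> ((x + real j * y) / real (Suc j)) ^ Suc j"
proof -
  define s where "s = (x + real j * y) / real (Suc j)"
  have s1: "real (Suc j) * s = x + real j * y" unfolding s_def by simp
  have "-1 \<le> s / y - 1" using x y unfolding s_def by (simp add: field_simps)
  from Bernoulli_inequality[OF this, of "Suc j"]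
  have b: "1 + real (Suc j) * (s / y - 1) \<le> (s / y) ^ Suc j" by simp
  have yp: "0 < y ^ Suc j" using y by simp
  have "(1 + real (Suc j) * (s / y - 1)) * y ^ Suc j \<le> (s / y) ^ Suc j * y ^ Suc j"
    using mult_right_mono[OF b less_imp_le[OF yp]] .
  also have "(s / y) ^ Suc j * y ^ Suc j = s ^ Suc j"
    using y by (simp add: power_divide)
  also have "(1 + real (Suc j) * (s / y - 1)) * y ^ Suc j = y ^ Suc j + (real (Suc j) * s - real (Suc j) * y) * y ^ j"
    using y by (simp add: field_simps)
  also have "\<dots> = x * y ^ j" unfolding s1 by (simp add: algebra_simps)
  finally show ?thesis unfolding s_def .
qed

lemma F_ge1: "1 \<le> n \<Longrightarrow> 1 \<le> F j n"
  unfolding F_def by (rule one_le_power) simp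

lemma F_mono: "1 \<le> n \<Longrightarrow> n \<le> n' \<Longrightarrow> F j n \<le> F j n'"
  unfolding F_def
  by (rule power_mono) (auto simp: divide_right_mono)

lemma F_step:
  assumes "M < n"
  shows "real (Suc M) * F j (n - M + 1) \<le> F (Suc j) n"
proof -
  define y where "y = (real (n - M + 1) - 1) / real j + 2"
  have "0 \<le> (real (n - M + 1) - 1) / real j" by (intro divide_nonneg_nonneg) auto
  hence y0: "0 < y" unfolding y_def by linarith
  have "real (Suc M) * F j (n - M + 1) = real (Suc M) * y ^ j" unfolding F_def y_def by simp
  also have "\<dots> \<le> ((real (Suc M) + real j * y) / real (Suc j)) ^ Suc j"
    by (rule amgm[OF _ y0]) simp
  also have "\<dots> \<le> F (Suc j) n" unfolding F_def
  proof (rule power_mono)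
    have "real (Suc M) + real j * y \<le> real n + 2 * real j + 1"
    proof (cases "j = 0")
      case True then show ?thesis using assms by simp
    next
      case False
      have "real j * y = real (n - M) + 2 * real j" unfolding y_def using False assms by (simp add: field_simps)
      then show ?thesis using assms by simp
    qed
    hence "(real (Suc M) + real j * y) / real (Suc j) \<le> (real n + 2 * real j + 1) / real (Suc j)"
      by (rule divide_right_mono) simp
    also have "\<dots> = (real n - 1) / real (Suc j) + 2" by (simp add: field_simps)
    finally show "(real (Suc M) + real j * y) / real (Suc j) \<le> (real n - 1) / real (Suc j) + 2" .
    show "0 \<le> (real (Suc M) + real j * y) / real (Suc j)" using y0 by simp
  qed
  finally show ?thesis .
qed

lemma main_bound:
  "\<forall>n u. 1 \<le> n \<longrightarrow> card (set u) \<le> j \<longrightarrow> rigid n u \<longrightarrow> real (length u) + 1 \<le> F j n"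
proof (induction j)
  case 0
  show ?case
  proof (intro allI impI)
    fix n and u :: "'a list" assume "card (set u) \<le> 0"
    hence "u = []" by simp
    thus "real (length u) + 1 \<le> F 0 n" unfolding F_def by simp
  qed
next
  case (Suc j)
  show ?case
  proof (intro allI impI)
    fix n and u :: "'a list"
    assume n1: "1 \<le> n" and cu: "card (set u) \<le> Suc j" and ru: "rigid n u"
    show "real (length u) + 1 \<le> F (Suc j) n"
    proof (cases "u = []")
      case True then show ?thesis using F_ge1[OF n1, of "Suc j"] by simp
    next
      case False
      define B where "B = set u"
      have Bne: "B \<noteq> {}" using False unfolding B_def by simp
      have fB: "finite B" unfolding B_def by simp
      obtain M where adM: "archdec B M u" using archdec_exists[OF Bne] unfolding B_def by blast
      have Mn: "M < n"
      proof (rule ccontr)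
        assume "\<not> M < n"
        hence un: "univ B n u" using univ_mono[OF archdec_univ[OF adM]] by simp
        define a where "a = hd u"
        have aB: "a \<in> B" using False unfolding a_def B_def by simp
        have "simeq_n n u (u @ [a])"
          unfolding simeq_iff
        proof (intro allI impI)
          fix w :: "'a list" assume lw: "length w \<le> n"
          show "subseq w u = subseq w (u @ [a])"
          proof
            assume "subseq w u" thus "subseq w (u @ [a])" by (rule subseq_rev_drop_many)
          next
            assume "subseq w (u @ [a])"
            hence "set w \<subseteq> B" using subseq_set aB unfolding B_def by fastforce
            thus "subseq w u" using un lw unfolding univ_def by blast
          qed
        qed
        moreover have "set (u @ [a]) \<subseteq> set u" using aB unfolding B_def by simp
        ultimately have "length (u @ [a]) \<le> length u" using ru unfolding rigid_def by blast
        thus False by simp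
      qed
      define G where "G = F j (n - M + 1)"
      have inner: "archdec B m z \<Longrightarrow> univ B p P \<Longrightarrow> set P \<subseteq> B \<Longrightarrow> rigid n (P @ z) \<Longrightarrow> p + m = M
          \<Longrightarrow> real (length z) + 1 \<le> real (Suc m) * G" for m z P p
      proof (induction arbitrary: P p rule: archdec.induct)
        case (ad0 s)
        have "card (set s) < card B" using ad0.hyps fB by (simp add: psubset_card_mono psubsetI)
        hence cs: "card (set s) \<le> j" using cu unfolding B_def by simp
        have "rigid (n - M) s"
          using rigid_piece[of n P s "[]" B p 0 "n - M"] ad0 univ0[of B "[]"] Mn by simp
        hence "real (length s) + 1 \<le> F j (n - M)" using Suc.IH cs Mn by simp
        also have "\<dots> \<le> G" unfolding G_def using Mn by (intro F_mono) auto
        finally show ?case by simp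
      next
        case (adS a r m z)
        have sz: "set z \<subseteq> B" using archdec_set[OF adS.hyps(4)] .
        have uz: "univ B m ([a] @ z)" using univ_app1[OF archdec_univ[OF adS.hyps(4)]] .
        have n_le: "n \<le> (n - M + 1) + p + m" using Mn adS.prems(4) by simp
        have sr: "set r \<subseteq> B" using adS.hyps(2) by auto
        have sS: "set ([a] @ z) \<subseteq> B" using sz adS.hyps(1) by simp
        have "rigid (n - M + 1) r"
          by (rule rigid_piece[OF adS.prems(3) adS.prems(1) uz adS.prems(2) sS sr n_le])
        moreover have "card (set r) \<le> j"
        proof -
          have "card (set r) \<le> card (B - {a})" using adS.hyps(2) fB by (simp add: card_mono)
          also have "\<dots> = card B - 1" using adS.hyps(1) fB by simp
          finally show ?thesis using cu unfolding B_def by simp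
        qed
        ultimately have br: "real (length r) + 1 \<le> G" unfolding G_def using Suc.IH Mn by simp
        have "real (length z) + 1 \<le> real (Suc m) * G"
          using adS.IH[where P="P @ r @ [a]" and p="Suc p"] univ_extend[OF adS.prems(1) adS.hyps(3)]
            adS.prems adS.hyps sr by simp
        thus ?case using br by (simp add: algebra_simps)
      qed
      have "real (length u) + 1 \<le> real (Suc M) * G"
        using inner[OF adM univ0, of "[]"] ru by simp
      also have "\<dots> \<le> F (Suc j) n" unfolding G_def by (rule F_step[OF Mn])
      finally show ?thesis .
    qed
  qed
qed

lemma upper_dir:
  assumes e: "simeq_n (Suc l) u v" and lu: "length u \<le> l"
  shows "v = u"
proof -
  have "length u \<le> Suc l" using lu by simp
  moreover have "subseq u u" by simp
  ultimately have uv: "subseq u v" using e unfolding simeq_iff by blast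
  have "subseq (take (Suc l) v) v" by (rule prefix_imp_subseq) (rule take_is_prefix)
  moreover have "length (take (Suc l) v) \<le> Suc l" by simp
  ultimately have "subseq (take (Suc l) v) u"
    using e unfolding simeq_iff by blast
  hence "length (take (Suc l) v) \<le> length u" by (rule list_emb_length)
  hence lv: "length v \<le> l" using lu by simp
  hence "length v \<le> Suc l" by simp
  moreover have "subseq v v" by simp
  ultimately have "subseq v u" using e unfolding simeq_iff by blast
  thus ?thesis using uv subseq_order.antisym by blast
qed

theorem proposition7:
  fixes A :: "'a set" and L :: "'a list set" and k l :: nat
  assumes "finite A" and "A \<noteq> {}" and "card A = k"
    and "L \<subseteq> lists A" and "finite L" and "L \<noteq> {}"
    and "l = Max (length ` L)"
  shows "1 + real k * (real l powr (1 / real k) - 2) < real (h A L)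
         \<and> h A L \<le> l + 1"
proof -
  have fin: "finite (length ` L)" using assms(5) by simp
  have maxle: "\<And>w. w \<in> L \<Longrightarrow> length w \<le> l" using assms(7) fin by simp
  have pt: "n_PT A (l + 1) L"
    unfolding n_PT_def
  proof (intro ballI impI)
    fix u v assume "u \<in> lists A" "v \<in> lists A" and e: "simeq_n (l + 1) u v"
    show "u \<in> L \<longleftrightarrow> v \<in> L"
    proof
      assume "u \<in> L" thus "v \<in> L" using upper_dir[of l u v] e maxle by simp
    next
      assume "v \<in> L" thus "u \<in> L" using upper_dir[of l v u] simeq_sym[OF e] maxle by simp
    qed
  qed
  hence up: "h A L \<le> l + 1" unfolding h_def by (rule Least_le)
  define n where "n = h A L"
  have ptn: "n_PT A n L" unfolding n_def h_def by (rule LeastI[where P="\<lambda>n. n_PT A n L", OF pt])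
  obtain w where wL: "w \<in> L" and lw: "length w = l"
  proof -
    have "l \<in> length ` L" using Max_in[OF fin] assms(6,7) by auto
    thus ?thesis using that by blast
  qed
  have wA: "set w \<subseteq> A" using wL assms(4) by auto
  have n1: "1 \<le> n"
  proof (rule ccontr)
    assume "\<not> 1 \<le> n" hence n0: "n = 0" by simp
    obtain a where a: "a \<in> A" using assms(2) by blast
    define v where "v = replicate (Suc l) a"
    have "v \<in> lists A" unfolding v_def using a by auto
    moreover have "simeq_n n w v" unfolding simeq_iff n0 by simp
    ultimately have "v \<in> L" using ptn wL assms(4) unfolding n_PT_def by blast
    hence "length v \<le> l" by (rule maxle)
    thus False unfolding v_def by simp
  qed
  have rw: "rigid n w"
    unfolding rigid_def
  proof (intro allI impI)
    fix v assume sv: "set v \<subseteq> set w" and e: "simeq_n n w v"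
    have "v \<in> lists A" using sv wA by auto
    hence "v \<in> L" using ptn wL assms(4) e unfolding n_PT_def by blast
    thus "length v \<le> length w" using maxle lw by simp
  qed
  have cw: "card (set w) \<le> k" using card_mono[OF assms(1) wA] assms(3) by simp
  have bound: "real l + 1 \<le> F k n" using main_bound n1 cw rw lw by blast
  have k0: "0 < k" using assms(1,2,3) by auto
  define b where "b = (real n - 1) / real k + 2"
  have b0: "0 < b" unfolding b_def using n1 by (simp add: add_nonneg_pos)
  have "real l < b ^ k" using bound unfolding F_def b_def by simp
  hence "real l powr (1 / real k) < (b ^ k) powr (1 / real k)"
    using k0 by (intro powr_less_mono2) auto
  also have "(b ^ k) powr (1 / real k) = b"
    using b0 k0 by (simp add: powr_realpow[symmetric] powr_powr)
  finally have "real l powr (1 / real k) < b" .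
  hence "real k * (real l powr (1 / real k) - 2) < real k * (b - 2)" using k0 by simp
  also have "real k * (b - 2) = real n - 1" unfolding b_def using k0 by simp
  finally have "1 + real k * (real l powr (1 / real k) - 2) < real n" by simp
  thus ?thesis using up unfolding n_def by simp
qed

end
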